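(* Let $\lambda>0$, $d_{\mathrm H},d_{\mathrm V}>0$ and positive integers $N_{\mathrm H},N_{\mathrm V}$, $N=N_{\mathrm H}N_{\mathrm V}$. For $n=1,\dots,N$ let $i(n)=\mathrm{mod}(n-1,N_{\mathrm H})$, $j(n)=\lfloor (n-1)/N_{\mathrm H}\rfloor$ and $\mathbf u_n=[0,\ i(n)d_{\mathrm H},\ j(n)d_{\mathrm V}]^{\mathrm T}\in\mathbb R^3$. For angles $(\varphi,\theta)$ define the wave vector $\mathbf k(\varphi,\theta)=\frac{2\pi}{\lambda}[\cos\theta\cos\varphi,\ \cos\theta\sin\varphi,\ \sin\theta]^{\mathrm T}$ and the array response vector $\mathbf a(\varphi,\theta)=[e^{\mathrm i\,\mathbf k(\varphi,\theta)^{\mathrm T}\mathbf u_1},\dots,e^{\mathrm i\,\mathbf k(\varphi,\theta)^{\mathrm T}\mathbf u_N}]^{\mathrm T}\in\mathbb C^N$. Let $(\varphi,\theta)$ be random with probability density $f(\varphi,\theta)=\frac{\cos\theta}{2\pi}$ on $[-\pi/2,\pi/2]\times[-\pi/2,\pi/2]$ (isotropic scattering in the half-space in front of the surface), and let $\mathbf R=\mathbb E\{\mathbf a(\varphi,\theta)\mathbf a(\varphi,\theta)^{\mathrm H}\}\in\mathbb C^{N\times N}$. Then for all $n,m\in\{1,\dots,N\}$, $$[\mathbf R]_{n,m}=\mathrm{sinc}\!\left(\frac{2\|\mathbf u_n-\mathbf u_m\|}{\lambda}\right),$$ where $\mathrm{sinc}(x)=\sin(\pi x)/(\pi x)$ (with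 $\mathrm{sinc}(0)=1$).
   Context: This models a reconfigurable intelligent surface (RIS) of $N$ elements of size $d_{\mathrm H}\times d_{\mathrm V}$ placed edge-to-edge on a rectangular grid in the $yz$-plane, indexed row by row; $\lambda$ is the wavelength; $\varphi$ is the azimuth and $\theta$ the elevation angle of an impinging plane wave; $\mathrm i$ is the imaginary unit and ${}^{\mathrm H}$ denotes conjugate transpose. *)

theory Defs
  imports "HOL-Probability.Probability"
begin

definition nsinc :: "real \<Rightarrow> real" where
  "nsinc x = (if x = 0 then 1 else sin (pi * x) / (pi * x))"

definition elem_pos :: "real \<Rightarrow> real \<Rightarrow> nat \<Rightarrow> nat \<Rightarrow> real^3" where
  "elem_pos dH dV NH n =
     vector [0, real ((n - 1) mod NH) * dH, real ((n - 1) div NH) * dV]"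

definition wave_vec :: "real \<Rightarrow> real \<Rightarrow> real \<Rightarrow> real^3" where
  "wave_vec lam \<phi> \<theta> =
     (2 * pi / lam) *\<^sub>R vector [cos \<theta> * cos \<phi>, cos \<theta> * sin \<phi>, sin \<theta>]"

definition array_resp :: "real \<Rightarrow> real \<Rightarrow> real \<Rightarrow> nat \<Rightarrow> nat \<Rightarrow> real \<Rightarrow> real \<Rightarrow> complex" where
  "array_resp lam dH dV NH n \<phi> \<theta> =
     exp (\<i> * complex_of_real (wave_vec lam \<phi> \<theta> \<bullet> elem_pos dH dV NH n))"

definition aoa_pdf :: "real \<times> real \<Rightarrow> real" where
  "aoa_pdf p = indicator ({-pi/2..pi/2} \<times> {-pi/2..pi/2}) p * cos (snd p) / (2 * pi)"

definition aoa_measure :: "(real \<times> real) measure" where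
  "aoa_measure = density lborel (\<lambda>p. ennreal (aoa_pdf p))"

definition spatial_corr :: "real \<Rightarrow> real \<Rightarrow> real \<Rightarrow> nat \<Rightarrow> nat \<Rightarrow> nat \<Rightarrow> complex" where
  "spatial_corr lam dH dV NH n m =
     (\<integral>p. array_resp lam dH dV NH n (fst p) (snd p) *
           cnj (array_resp lam dH dV NH m (fst p) (snd p)) \<partial>aoa_measure)"

end

theory Submission
  imports Defs
begin

definition EE :: "real \<Rightarrow> real \<Rightarrow> real \<Rightarrow> real \<Rightarrow> complex" where
  "EE c d x y = exp (\<i> * (of_real c * cos (of_real y) * sin (of_real x) + of_real d * sin (of_real y)))"

lemma EE_real: "EE c d x y = exp (\<i> * of_real (c * cos y * sin x + d * sin y))"
  by (simp add: EE_def sin_of_real cos_of_real)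

lemma contEE[continuous_intros]:
  fixes f g c d :: "'a::t2_space \<Rightarrow> real"
  assumes "continuous_on S f" "continuous_on S g" "continuous_on S c" "continuous_on S d"
  shows "continuous_on S (\<lambda>p. EE (c p) (d p) (f p) (g p))"
  unfolding EE_real using assms by (auto intro!: continuous_intros)

definition dA where "dA c d x y =
  (of_real (- sin y * sin x) + of_real (sin y * cos x) * \<i> * of_real (c * cos y * cos x)) * EE c d x y"
definition dB where "dB c d x y =
  (of_real (sin x * sin y) - of_real (sin x * cos y) * \<i> * of_real (d * cos y - c * sin y * sin x)) * EE c d x y"
definition DV where "DV c d x y = \<i> * of_real (cos y * (c * sin y - d * cos y * sin x)) * EE c d x y"

lemma derA:
  "((\<lambda>x. of_real (sin y * cos x) * EE c d x y) has_vector_derivative dA c d x0 y) (at x0 within S)"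
proof -
  have "((\<lambda>z. of_real (sin y) * cos z * exp (\<i> * (of_real c * cos (of_real y) * sin z + of_real d * sin (of_real y))))
     has_field_derivative
     (of_real (sin y) * (- sin (of_real x0)) * exp (\<i> * (of_real c * cos (of_real y) * sin (of_real x0) + of_real d * sin (of_real y)))
     + of_real (sin y) * cos (of_real x0) * (exp (\<i> * (of_real c * cos (of_real y) * sin (of_real x0) + of_real d * sin (of_real y))) * (\<i> * (of_real c * cos (of_real y) * cos (of_real x0))))))
     (at (of_real x0))"
    by (auto intro!: derivative_eq_intros)
  from has_vector_derivative_real_field[OF this, of S] show ?thesis
    by (simp add: dA_def EE_def sin_of_real cos_of_real algebra_simps)
qed

lemma derB:
  "((\<lambda>y. - of_real (sin x * cos y) * EE c d x y) has_vector_derivative dB c d x y0) (at y0 within S)"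
proof -
  have "((\<lambda>z. - of_real (sin x) * cos z * exp (\<i> * (of_real c * cos z * sin (of_real x) + of_real d * sin z)))
     has_field_derivative
     (- of_real (sin x) * (- sin (of_real y0)) * exp (\<i> * (of_real c * cos (of_real y0) * sin (of_real x) + of_real d * sin (of_real y0)))
     + - of_real (sin x) * cos (of_real y0) * (exp (\<i> * (of_real c * cos (of_real y0) * sin (of_real x) + of_real d * sin (of_real y0))) * (\<i> * (of_real c * (- sin (of_real y0)) * sin (of_real x) + of_real d * cos (of_real y0))))))
     (at (of_real y0))"
    by (auto intro!: derivative_eq_intros)
  from has_vector_derivative_real_field[OF this, of S] show ?thesis
    by (simp add: dB_def EE_def sin_of_real cos_of_real algebra_simps)
qed

lemma DV_eq: "DV c d x y = dA c d x y + dB c d x y"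
proof -
  have *: "cos x ^ 2 = 1 - sin x ^ 2" by (simp add: cos_squared_eq)
  have "\<i> * of_real (cos y * (c * sin y - d * cos y * sin x)) =
    (of_real (- sin y * sin x) + of_real (sin y * cos x) * \<i> * of_real (c * cos y * cos x)) +
    (of_real (sin x * sin y) - of_real (sin x * cos y) * \<i> * of_real (d * cos y - c * sin y * sin x))"
  proof -
    have e: "cos y * (c * sin y - d * cos y * sin x) =
     sin y * cos x * (c * cos y * cos x) - sin x * cos y * (d * cos y - c * sin y * sin x)"
      using sin_cos_squared_add[of x] by algebra
    show ?thesis by (simp add: complex_eq_iff e)
  qed
  then show ?thesis unfolding DV_def dA_def dB_def by (simp add: algebra_simps)
qed

lemma contdA[continuous_intros]:
  fixes f g :: "'a::t2_space \<Rightarrow> real"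
  assumes "continuous_on S f" "continuous_on S g"
  shows "continuous_on S (\<lambda>p. dA c d (f p) (g p))"
  unfolding dA_def using assms by (auto intro!: continuous_intros)
lemma contdB[continuous_intros]:
  fixes f g :: "'a::t2_space \<Rightarrow> real"
  assumes "continuous_on S f" "continuous_on S g"
  shows "continuous_on S (\<lambda>p. dB c d (f p) (g p))"
  unfolding dB_def using assms by (auto intro!: continuous_intros)
lemma contDV[continuous_intros]:
  fixes f g c d :: "'a::t2_space \<Rightarrow> real"
  assumes "continuous_on S f" "continuous_on S g" "continuous_on S c" "continuous_on S d"
  shows "continuous_on S (\<lambda>p. DV (c p) (d p) (f p) (g p))"
  unfolding DV_def using assms by (auto intro!: continuous_intros)

abbreviation "BX \<equiv> cbox (-(pi/2), -(pi/2)) (pi/2, pi/2::real)"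

lemma intA0: "integral {-(pi/2)..pi/2} (\<lambda>x. dA c d x y) = 0"
proof -
  have "((\<lambda>x. dA c d x y) has_integral
     (of_real (sin y * cos (pi/2)) * EE c d (pi/2) y - of_real (sin y * cos (-(pi/2))) * EE c d (-(pi/2)) y)) {-(pi/2)..pi/2}"
    apply (rule fundamental_theorem_of_calculus) apply simp apply (rule derA) done
  then show ?thesis by (simp add: integral_unique)
qed

lemma intB0: "integral {-(pi/2)..pi/2} (\<lambda>y. dB c d x y) = 0"
proof -
  have "((\<lambda>y. dB c d x y) has_integral
     (- of_real (sin x * cos (pi/2)) * EE c d x (pi/2) - (- of_real (sin x * cos (-(pi/2))) * EE c d x (-(pi/2))))) {-(pi/2)..pi/2}"
    apply (rule fundamental_theorem_of_calculus) apply simp apply (rule derB) done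
  then show ?thesis by (simp add: integral_unique)
qed

lemma div0: "integral BX (\<lambda>p. DV c d (fst p) (snd p)) = 0"
proof -
  have cA: "continuous_on BX (\<lambda>p. dA c d (fst p) (snd p))"
    by (auto intro!: continuous_intros)
  have cB: "continuous_on BX (\<lambda>p. dB c d (fst p) (snd p))"
    by (auto intro!: continuous_intros)
  have "integral BX (\<lambda>p. DV c d (fst p) (snd p)) =
     integral BX (\<lambda>p. dA c d (fst p) (snd p)) + integral BX (\<lambda>p. dB c d (fst p) (snd p))"
    unfolding DV_eq
    by (rule integral_add; rule integrable_continuous; fact)
  also have "integral BX (\<lambda>p. dB c d (fst p) (snd p)) = 0"
    using integral_prod_continuous[OF cB] by (simp add: cbox_interval intB0)
  also have "integral BX (\<lambda>p. dA c d (fst p) (snd p)) = 0"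
  proof -
    have c2: "continuous_on BX (\<lambda>(x, y). dA c d x y)"
      using cA by (simp add: case_prod_beta')
    have "integral BX (\<lambda>p. dA c d (fst p) (snd p)) =
      integral (cbox (-(pi/2)) (pi/2)) (\<lambda>x. integral (cbox (-(pi/2)) (pi/2)) (\<lambda>y. dA c d x y))"
      using integral_prod_continuous[OF cA] by simp
    also have "\<dots> = integral (cbox (-(pi/2)) (pi/2)) (\<lambda>y. integral (cbox (-(pi/2)) (pi/2)) (\<lambda>x. dA c d x y))"
      by (rule integral_swap_continuous[OF c2])
    finally show ?thesis by (simp add: cbox_interval intA0)
  qed
  finally show ?thesis by simp
qed


definition Fk :: "real \<Rightarrow> real \<Rightarrow> complex" where
  "Fk c d = integral BX (\<lambda>p. of_real (cos (snd p)) * EE c d (fst p) (snd p))"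

lemma derS:
  "((\<lambda>s. of_real (cos y) * EE (r * cos s) (r * sin s) x y) has_vector_derivative
     DV (r * cos s0) (r * sin s0) x y) (at s0 within S)"
proof -
  have "((\<lambda>z. of_real (cos y) * exp (\<i> * (of_real r * cos z * of_real (cos y) * of_real (sin x) + of_real r * sin z * of_real (sin y))))
     has_field_derivative
     of_real (cos y) * (exp (\<i> * (of_real r * cos (of_real s0) * of_real (cos y) * of_real (sin x) + of_real r * sin (of_real s0) * of_real (sin y)))
      * (\<i> * (of_real r * (- sin (of_real s0)) * of_real (cos y) * of_real (sin x) + of_real r * cos (of_real s0) * of_real (sin y)))))
     (at (of_real s0))"
    by (auto intro!: derivative_eq_intros)
  from has_vector_derivative_real_field[OF this, of S] show ?thesis
    by (simp add: DV_def EE_real sin_of_real cos_of_real algebra_simps)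
qed

lemma rot_le:
  assumes "s1 \<le> s2"
  shows "Fk (r * cos s1) (r * sin s1) = Fk (r * cos s2) (r * sin s2)"
proof -
  let ?h = "\<lambda>s p. of_real (cos (snd p)) * EE (r * cos s) (r * sin s) (fst p) (snd p)"
  have ci: "\<And>s. ?h s integrable_on BX"
    by (rule integrable_continuous) (auto intro!: continuous_intros)
  have "Fk (r * cos s2) (r * sin s2) - Fk (r * cos s1) (r * sin s1) =
     integral BX (\<lambda>p. ?h s2 p - ?h s1 p)"
    unfolding Fk_def by (rule integral_diff[symmetric]; rule ci)
  also have "\<dots> = integral BX (\<lambda>p. integral (cbox s1 s2) (\<lambda>s. DV (r * cos s) (r * sin s) (fst p) (snd p)))"
  proof (rule integral_cong)
    fix p :: "real \<times> real"
    have "((\<lambda>s. DV (r * cos s) (r * sin s) (fst p) (snd p)) has_integral (?h s2 p - ?h s1 p)) {s1..s2}"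
      apply (rule fundamental_theorem_of_calculus[OF assms]) apply (rule derS) done
    then show "?h s2 p - ?h s1 p = integral (cbox s1 s2) (\<lambda>s. DV (r * cos s) (r * sin s) (fst p) (snd p))"
      by (simp add: cbox_interval integral_unique)
  qed
  also have "\<dots> = integral (cbox s1 s2) (\<lambda>s. integral BX (\<lambda>p. DV (r * cos s) (r * sin s) (fst p) (snd p)))"
    by (rule integral_swap_continuous) (auto simp: case_prod_beta' intro!: continuous_intros)
  also have "\<dots> = 0" by (simp add: div0)
  finally show ?thesis by simp
qed

lemma int_cos_exp:
  assumes "r \<noteq> 0"
  shows "((\<lambda>y. of_real (cos y) * EE 0 r x y) has_integral of_real (2 * sin r / r)) {-(pi/2)..pi/2}"
proof -
  have d: "\<And>y0. ((\<lambda>z. exp (\<i> * of_real r * sin z) / (\<i> * of_real r)) has_field_derivative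
      exp (\<i> * of_real r * sin (of_real y0)) * (\<i> * of_real r * cos (of_real y0)) / (\<i> * of_real r)) (at (of_real y0))"
    by (auto intro!: derivative_eq_intros)
  have "((\<lambda>y. of_real (cos y) * EE 0 r x y) has_integral
     (exp (\<i> * of_real r * sin (of_real (pi/2))) / (\<i> * of_real r) - exp (\<i> * of_real r * sin (of_real (-(pi/2)))) / (\<i> * of_real r))) {-(pi/2)..pi/2}"
    apply (rule fundamental_theorem_of_calculus[where f = "\<lambda>y. exp (\<i> * of_real r * sin (of_real y)) / (\<i> * of_real r)"])
     apply simp
    using has_vector_derivative_real_field[OF d] assms
    by (simp add: EE_def sin_of_real cos_of_real field_simps)
  moreover have "exp (\<i> * of_real r) - exp (-(\<i> * of_real r)) = 2 * \<i> * of_real (sin r)"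
    by (simp add: complex_eq_iff Re_exp Im_exp)
  ultimately show ?thesis using assms
    by (simp add: sin_of_real field_simps)
qed

lemma int_cos:
  shows "((\<lambda>y. of_real (cos y) * EE 0 0 x y) has_integral 2) {-(pi/2)..pi/2}"
proof -
  have "((\<lambda>y. of_real (cos y) * EE 0 0 x y) has_integral (of_real (sin (pi/2)) - of_real (sin (-(pi/2))) :: complex)) {-(pi/2)..pi/2}"
    apply (rule fundamental_theorem_of_calculus[where f = "\<lambda>y. of_real (sin y)"])
     apply simp
    apply (simp add: EE_def)
    apply (rule has_vector_derivative_real_field[where f = "\<lambda>z. sin z", simplified sin_of_real cos_of_real])
    by (auto intro!: derivative_eq_intros simp: cos_of_real)
  then show ?thesis by simp
qed

lemma Fk_base:
  "Fk 0 r = (if r = 0 then 2 * pi else of_real (2 * pi * sin r / r))"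
proof -
  have c: "continuous_on BX (\<lambda>p. of_real (cos (snd p)) * EE 0 r (fst p) (snd p))"
    by (auto intro!: continuous_intros)
  have "Fk 0 r = integral {-(pi/2)..pi/2} (\<lambda>x. integral {-(pi/2)..pi/2} (\<lambda>y. of_real (cos y) * EE 0 r x y))"
    unfolding Fk_def using integral_prod_continuous[OF c] by (simp add: cbox_interval)
  also have "\<dots> = integral {-(pi/2)..pi/2} (\<lambda>x. if r = 0 then 2 else of_real (2 * sin r / r))"
  proof (rule integral_cong)
    fix x show "integral {-(pi/2)..pi/2} (\<lambda>y. of_real (cos y) * EE 0 r x y) = (if r = 0 then 2 else of_real (2 * sin r / r))"
      using int_cos_exp[of r x] int_cos[of x] by (cases "r = 0") (auto intro: integral_unique)
  qed
  also have "\<dots> = (if r = 0 then 2 * pi else of_real (2 * pi * sin r / r))"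
    by (simp add: scaleR_conv_of_real)
  finally show ?thesis .
qed

lemma Fk_rot: "Fk c d = Fk 0 (sqrt (c^2 + d^2))"
proof (cases "sqrt (c^2 + d^2) = 0")
  case True
  then have "c = 0" "d = 0" by (auto simp: sum_power2_eq_zero_iff)
  then show ?thesis by simp
next
  case False
  define r where "r = sqrt (c^2 + d^2)"
  have r0: "r > 0" using False unfolding r_def by (simp add: add_pos_nonneg order_less_le)
  have "(c/r)^2 + (d/r)^2 = 1" using r0 unfolding r_def
    by (auto simp add: power_divide add_divide_distrib[symmetric])
  then obtain t where t: "c/r = cos t" "d/r = sin t" by (metis sincos_total_2pi)
  then have cd: "c = r * cos t" "d = r * sin t" using r0 by (auto simp: field_simps)
  have "Fk (r * cos t) (r * sin t) = Fk (r * cos (pi/2)) (r * sin (pi/2))"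
  proof (cases "t \<le> pi/2")
    case True then show ?thesis by (rule rot_le)
  next
    case False then show ?thesis by (intro rot_le[symmetric]) simp
  qed
  then show ?thesis using cd unfolding r_def by simp
qed

lemma dot_eq: "wave_vec lam x y \<bullet> elem_pos dH dV NH n =
   2*pi/lam * (cos y * sin x * (real ((n-1) mod NH) * dH) + sin y * (real ((n-1) div NH) * dV))"
  by (simp add: wave_vec_def elem_pos_def inner_vec_def sum_3 algebra_simps)

lemma prod_eq: "array_resp lam dH dV NH n x y * cnj (array_resp lam dH dV NH m x y) =
   EE (2*pi/lam * ((real ((n-1) mod NH) - real ((m-1) mod NH)) * dH))
      (2*pi/lam * ((real ((n-1) div NH) - real ((m-1) div NH)) * dV)) x y"
proof -
  have "array_resp lam dH dV NH n x y * cnj (array_resp lam dH dV NH m x y) =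
     exp (\<i> * of_real (wave_vec lam x y \<bullet> elem_pos dH dV NH n - wave_vec lam x y \<bullet> elem_pos dH dV NH m))"
    unfolding array_resp_def by (simp add: exp_cnj exp_add[symmetric] algebra_simps)
  then show ?thesis unfolding EE_real dot_eq by (simp add: algebra_simps)
qed

lemma norm_eq: "norm (elem_pos dH dV NH n - elem_pos dH dV NH m) =
   sqrt (((real ((n-1) mod NH) - real ((m-1) mod NH)) * dH)^2 + ((real ((n-1) div NH) - real ((m-1) div NH)) * dV)^2)"
  by (simp add: norm_eq_sqrt_inner elem_pos_def inner_vec_def sum_3 power2_eq_square algebra_simps)

lemma meas_int:
  "(\<integral>p. EE c d (fst p) (snd p) \<partial>aoa_measure) = of_real (1 / (2*pi)) * Fk c d"
proof -
  let ?g = "\<lambda>p. of_real (cos (snd p) / (2*pi)) * EE c d (fst p) (snd p)"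
  have cg: "continuous_on BX ?g" by (auto intro!: continuous_intros)
  have mE: "(\<lambda>p. EE c d (fst p) (snd p)) \<in> borel_measurable lborel"
    unfolding measurable_lborel2
    by (rule borel_measurable_continuous_onI) (auto intro!: continuous_intros)
  have BXeq: "BX = {-pi/2..pi/2} \<times> {-pi/2..pi/2}"
    by (simp only: cbox_Pair_eq) (simp add: cbox_interval)
  have ap: "aoa_pdf = (\<lambda>p. indicator BX p * (cos (snd p) / (2*pi)))"
    by (auto simp: aoa_pdf_def BXeq)
  have mp: "aoa_pdf \<in> borel_measurable lborel"
    unfolding ap
  proof (rule borel_measurable_times)
    show "indicator BX \<in> borel_measurable lborel"
      by (rule borel_measurable_indicator) (simp add: borel_closed)
    show "(\<lambda>p. cos (snd p) / (2*pi)) \<in> borel_measurable lborel"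
      unfolding measurable_lborel2
      by (rule borel_measurable_continuous_onI) (auto intro!: continuous_intros)
  qed
  have "(\<integral>p. EE c d (fst p) (snd p) \<partial>aoa_measure) = (\<integral>p. aoa_pdf p *\<^sub>R EE c d (fst p) (snd p) \<partial>lborel)"
    unfolding aoa_measure_def
  proof (rule integral_density[OF mE mp])
    show "AE x in lborel. 0 \<le> aoa_pdf x"
      by (auto simp: aoa_pdf_def indicator_def mem_Times_iff intro!: divide_nonneg_pos cos_ge_zero)
  qed
  also have "\<dots> = (\<integral>p. indicator BX p *\<^sub>R ?g p \<partial>lborel)"
    by (rule Bochner_Integration.integral_cong) (auto simp: aoa_pdf_def BXeq indicator_def scaleR_conv_of_real)
  also have "\<dots> = integral BX ?g"
  proof -
    have "set_integrable lborel BX ?g"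
      unfolding set_integrable_def by (rule borel_integrable_compact[OF compact_cbox cg])
    from set_borel_integral_eq_integral(2)[OF this] show ?thesis
      unfolding set_lebesgue_integral_def .
  qed
  also have "\<dots> = integral BX (\<lambda>p. of_real (1 / (2*pi)) * (of_real (cos (snd p)) * EE c d (fst p) (snd p)))"
    by (rule integral_cong) simp
  also have "\<dots> = of_real (1 / (2*pi)) * Fk c d"
    unfolding Fk_def by (rule integral_mult_right)
  finally show ?thesis .
qed

theorem proposition1:
  fixes lam dH dV :: real and NH NV n m :: nat
  assumes "lam > 0" and "dH > 0" and "dV > 0" and "NH > 0" and "NV > 0"
    and "n \<in> {1..NH * NV}" and "m \<in> {1..NH * NV}"
  shows "spatial_corr lam dH dV NH n m =
    complex_of_real (nsinc (2 * norm (elem_pos dH dV NH n - elem_pos dH dV NH m) / lam))"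
proof -
  define a where "a = (real ((n-1) mod NH) - real ((m-1) mod NH)) * dH"
  define b where "b = (real ((n-1) div NH) - real ((m-1) div NH)) * dV"
  define k where "k = 2*pi/lam"
  define L where "L = sqrt (a^2 + b^2)"
  have k0: "k > 0" using assms(1) by (simp add: k_def)
  have sc: "spatial_corr lam dH dV NH n m = of_real (1 / (2*pi)) * Fk (k * a) (k * b)"
    unfolding spatial_corr_def prod_eq a_def b_def k_def by (rule meas_int)
  have "sqrt ((k*a)^2 + (k*b)^2) = k * L"
    using k0 by (simp add: L_def power_mult_distrib distrib_left[symmetric] real_sqrt_mult)
  then have sc2: "spatial_corr lam dH dV NH n m = of_real (1 / (2*pi)) * Fk 0 (k * L)"
    using sc Fk_rot[of "k*a" "k*b"] by simp
  have nm: "norm (elem_pos dH dV NH n - elem_pos dH dV NH m) = L"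
    unfolding norm_eq L_def a_def b_def ..
  have pk: "pi * (2 * L / lam) = k * L" by (simp add: k_def)
  show ?thesis
  proof (cases "L = 0")
    case True
    then show ?thesis unfolding sc2 nm by (simp add: Fk_base nsinc_def)
  next
    case False
    then have "k * L \<noteq> 0" using k0 by simp
    moreover have "2 * L / lam \<noteq> 0" using False assms(1) by simp
    ultimately have ns: "nsinc (2 * L / lam) = sin (k * L) / (k * L)"
      unfolding nsinc_def pk[symmetric] by simp
    have "(1 / (2*pi)) * (2 * pi * sin (k * L) / (k * L)) = sin (k * L) / (k * L)"
      by simp
    then have "of_real (1 / (2*pi)) * of_real (2 * pi * sin (k * L) / (k * L)) = (of_real (sin (k * L) / (k * L)) :: complex)"
      by (metis of_real_mult)
    then show ?thesis unfolding sc2 nm ns Fk_base using \<open>k * L \<noteq> 0\<close> by simp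
  qed
qed

end
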